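(* Let $G$ be a graph on $t>1000$ vertices. For $i\in\{2,3\}$ let $e_i$ be the number of edges of $G$ of weight $i$, and let $\bar{e}$ be the number of edges of the complement of $G$. If $\bar{e}\le t^2/4$, then $w(G)=2^{e_2}3^{e_3}\le 2^{\binom{t}{2}}2^{-0.16\bar{e}}$. If $\bar{e}>t^2/4$, then $w(G)<3^{t^2/4}$.
   Context: For a graph $G$, give each edge weight $2$ if it belongs to some triangle of $G$ and weight $3$ otherwise; $w(G)$ is the product of the weights of all edges of $G$. *)

theory Defs
  imports Complex_Main
begin

definition simple_graph :: "'a set \<Rightarrow> 'a set set \<Rightarrow> bool" where
  "simple_graph V E \<longleftrightarrow> finite V \<and> (\<forall>e\<in>E. e \<subseteq> V \<and> card e = 2)"

definition in_triangle :: "'a set \<Rightarrow> 'a set set \<Rightarrow> 'a set \<Rightarrow> bool" where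
  "in_triangle V E e \<longleftrightarrow> (\<exists>u v z. e = {u, v} \<and> z \<in> V \<and> {u, z} \<in> E \<and> {v, z} \<in> E)"

definition edge_weight :: "'a set \<Rightarrow> 'a set set \<Rightarrow> 'a set \<Rightarrow> nat" where
  "edge_weight V E e = (if in_triangle V E e then 2 else 3)"

definition graph_weight :: "'a set \<Rightarrow> 'a set set \<Rightarrow> nat" where
  "graph_weight V E = (\<Prod>e\<in>E. edge_weight V E e)"

definition num_edges_weight :: "'a set \<Rightarrow> 'a set set \<Rightarrow> nat \<Rightarrow> nat" where
  "num_edges_weight V E i = card {e\<in>E. edge_weight V E e = i}"

definition complement_edges :: "'a set \<Rightarrow> 'a set set \<Rightarrow> 'a set set" where
  "complement_edges V E = {e. e \<subseteq> V \<and> card e = 2 \<and> e \<notin> E}"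

end

theory Submission
  imports Defs
begin

lemma pairs_card:
  assumes "finite S" "\<forall>e\<in>S. card e = 2"
  shows "card {(x,y). x\<noteq>y \<and> {x,y}\<in>S} = 2 * card S"
proof -
  have eq: "{(x,y). x\<noteq>y \<and> {x,y}\<in>S} = (\<Union>e\<in>S. {(x,y). x\<noteq>y \<and> {x,y}=e})" by auto
  have c2: "card {(x,y). x\<noteq>y \<and> {x,y}=e} = 2" if "e\<in>S" for e
  proof -
    have "card e = 2" using assms(2) that by auto
    then obtain u v where uv: "e={u,v}" "u\<noteq>v" by (auto simp: card_2_iff)
    then have "{(x,y). x\<noteq>y \<and> {x,y}=e} = {(u,v),(v,u)}" by (auto simp: doubleton_eq_iff)
    then show ?thesis using uv by simp
  qed
  have "card (\<Union>e\<in>S. {(x,y). x\<noteq>y \<and> {x,y}=e}) = (\<Sum>e\<in>S. card {(x,y). x\<noteq>y \<and> {x,y}=e})"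
  proof (rule card_UN_disjoint)
    show "finite S" by fact
    show "\<forall>i\<in>S. finite {(x,y). x\<noteq>y \<and> {x,y}=i}"
    proof
      fix i assume "i \<in> S"
      then have "card {(x,y). x\<noteq>y \<and> {x,y}=i} = 2" by (rule c2)
      then show "finite {(x,y). x\<noteq>y \<and> {x,y}=i}" by (intro card_ge_0_finite) simp
    qed
    show "\<forall>i\<in>S. \<forall>j\<in>S. i \<noteq> j \<longrightarrow> {(x,y). x\<noteq>y \<and> {x,y}=i} \<inter> {(x,y). x\<noteq>y \<and> {x,y}=j} = {}"
      by auto
  qed
  also have "\<dots> = (\<Sum>e\<in>S. 2)" using c2 by simp
  finally show ?thesis using eq by simp
qed

lemma real_key:
  fixes t dx dy hx hy :: real
  assumes "1\<le>hx" "hx\<le>dx" "1\<le>hy" "hy\<le>dy" "dx+dy\<le>t" "dx \<le> t-1" "dy \<le> t-1"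
  shows "(t-1-dx)/hx + (t-1-dy)/hy \<ge> 2 - 4/t"
proof -
  have a1: "(t-1-dx)/hx \<ge> (t-1-dx)/dx" using assms by (intro divide_left_mono) auto
  have a2: "(t-1-dy)/hy \<ge> (t-1-dy)/dy" using assms by (intro divide_left_mono) auto
  have a3: "(t-1-dx)/dx = (t-1)/dx - 1" using assms by (simp add: field_simps)
  have a4: "(t-1-dy)/dy = (t-1)/dy - 1" using assms by (simp add: field_simps)
  have a5: "1/dx + 1/dy \<ge> 4/(dx+dy)"
  proof -
    have "(dx-dy)^2 \<ge> 0" by simp
    then have "4*dx*dy \<le> (dx+dy)*(dx+dy)" by (simp add: power2_eq_square algebra_simps)
    then show ?thesis using assms by (simp add: field_simps)
  qed
  have a6: "4/(dx+dy) \<ge> 4/t" using assms by (intro divide_left_mono) auto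
  have t2: "t \<ge> 2" using assms by linarith
  have "(t-1)/dx + (t-1)/dy = (t-1)*(1/dx+1/dy)" by (simp add: algebra_simps)
  also have "\<dots> \<ge> (t-1)*(4/t)" using a5 a6 t2 by (intro mult_left_mono) auto
  finally have a7: "(t-1)/dx + (t-1)/dy \<ge> (t-1)*(4/t)" .
  have a8: "(t-1)*(4/t) - 2 = 2 - 4/t" using t2 by (simp add: field_simps)
  show ?thesis using a1 a2 a3 a4 a7 a8 by linarith
qed


theorem lemma4p3:
  fixes V :: "'a set" and E :: "'a set set"
  assumes "simple_graph V E"
    and "card V > 1000"
  defines "t \<equiv> card V"
    and "e2 \<equiv> num_edges_weight V E 2"
    and "e3 \<equiv> num_edges_weight V E 3"
    and "ebar \<equiv> card (complement_edges V E)"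
  shows "(real ebar \<le> real t ^ 2 / 4 \<longrightarrow>
            graph_weight V E = 2 ^ e2 * 3 ^ e3 \<and>
            real (graph_weight V E) \<le> 2 powr real (t choose 2) * 2 powr (- 0.16 * real ebar))
       \<and> (real ebar > real t ^ 2 / 4 \<longrightarrow>
            real (graph_weight V E) < 3 powr (real t ^ 2 / 4))"
proof -
  have finV: "finite V" and Esub: "\<And>e. e \<in> E \<Longrightarrow> e \<subseteq> V \<and> card e = 2"
    using assms(1) unfolding simple_graph_def by auto
  have finE: "finite E"
  proof -
    have "E \<subseteq> Pow V" using Esub by auto
    then show ?thesis using finV finite_subset by blast
  qed
  define H where "H = {e\<in>E. \<not> in_triangle V E e}"
  define T where "T = {e\<in>E. in_triangle V E e}"
  define C where "C = complement_edges V E"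
  have e3H: "e3 = card H" unfolding e3_def num_edges_weight_def H_def edge_weight_def
    by (rule arg_cong[where f=card]) auto
  have e2T: "e2 = card T" unfolding e2_def num_edges_weight_def T_def edge_weight_def
    by (rule arg_cong[where f=card]) auto
  have finH: "finite H" "finite T" using finE unfolding H_def T_def by auto
  have cardE: "card E = e2 + e3"
  proof -
    have u: "E = T \<union> H" and i: "T \<inter> H = {}" unfolding H_def T_def by auto
    have "card (T \<union> H) = card T + card H" using finH(2) finH(1) i by (rule card_Un_disjoint)
    then show ?thesis using u e2T e3H by simp
  qed
  have finC: "finite C"
  proof -
    have "C \<subseteq> Pow V" unfolding C_def complement_edges_def by auto
    then show ?thesis using finV finite_subset by blast
  qed
  have cardEC: "card E + ebar = t choose 2"
  proof -
    have u: "E \<union> C = {B. B \<subseteq> V \<and> card B = 2}" and i: "E \<inter> C = {}"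
      unfolding C_def complement_edges_def using Esub by auto
    have "card (E \<union> C) = card E + card C" using finE finC i by (rule card_Un_disjoint)
    then have "card E + card C = card {B. B \<subseteq> V \<and> card B = 2}" using u by simp
    then show ?thesis using n_subsets[OF finV] unfolding t_def ebar_def C_def by simp
  qed
  have gw: "graph_weight V E = 2 ^ e2 * 3 ^ e3"
  proof -
    have "graph_weight V E = (\<Prod>e\<in>E. if in_triangle V E e then 2 else 3)"
      unfolding graph_weight_def edge_weight_def by simp
    also have "\<dots> = (\<Prod>e\<in>E \<inter> {e. in_triangle V E e}. 2) * (\<Prod>e\<in>E \<inter> - {e. in_triangle V E e}. 3)"
      by (rule prod.If_cases[OF finE])
    also have "E \<inter> {e. in_triangle V E e} = T" unfolding T_def by auto
    also have "E \<inter> - {e. in_triangle V E e} = H" unfolding H_def by auto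
    finally show ?thesis using e2T e3H by simp
  qed
  have part2: "real ebar > real t ^ 2 / 4 \<longrightarrow> real (graph_weight V E) < 3 powr (real t ^ 2 / 4)"
  proof
    assume h: "real ebar > real t ^ 2 / 4"
    have "t*(t-1) div 2 * 2 \<le> t*(t-1)" by simp
    also have "\<dots> \<le> t*t" by simp
    finally have "2 * (t choose 2) \<le> t*t" unfolding choose_two by simp
    then have "2 * real (t choose 2) \<le> real t ^ 2"
      by (simp add: power2_eq_square flip: of_nat_mult)
    moreover have "real (card E) + real ebar = real (t choose 2)"
      using cardEC by (simp flip: of_nat_add)
    ultimately have lt: "real (card E) < real t ^ 2 / 4" using h by linarith
    have "graph_weight V E \<le> 3 ^ e2 * 3 ^ e3" unfolding gw
      by (intro mult_right_mono power_mono) auto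
    also have "\<dots> = 3 ^ card E" using cardE by (simp add: power_add)
    finally have "real (graph_weight V E) \<le> 3 ^ card E"
      by (simp flip: of_nat_power)
    also have "(3::real) ^ card E = 3 powr real (card E)" by (simp add: powr_realpow)
    also have "\<dots> < 3 powr (real t ^ 2 / 4)" using lt by (intro powr_less_mono) auto
    finally show "real (graph_weight V E) < 3 powr (real t ^ 2 / 4)" .
  qed
  have e3bound: "19 * real e3 \<le> 20 * real ebar"
  proof -
    define nbr where "nbr x = {z\<in>V. {x,z}\<in>E}" for x
    define non where "non x = {z\<in>V. z\<noteq>x \<and> {x,z}\<notin>E}" for x
    define Hn where "Hn x = {z\<in>V. {x,z}\<in>H}" for x
    define a where "a x = real (card (non x))" for x
    define h where "h x = real (card (Hn x))" for x
    define d where "d x = real (card (nbr x))" for x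
    define f where "f x = a x / h x" for x
    have Ev: "x \<in> V \<and> y \<in> V \<and> x \<noteq> y" if "{x,y} \<in> E" for x y
    proof -
      have "{x,y} \<subseteq> V" "card {x,y} = 2" using Esub[OF that] by auto
      then show ?thesis by (cases "x = y") auto
    qed
    have finn: "finite (nbr x)" "finite (non x)" "finite (Hn x)" for x
      unfolding nbr_def non_def Hn_def using finV by auto
    have OHeq: "Sigma V Hn = {(x,y). x\<noteq>y \<and> {x,y}\<in>H}"
      unfolding Hn_def H_def using Ev by auto
    have Hc: "\<forall>e\<in>H. card e = 2" unfolding H_def using Esub by auto
    have cOH: "card (Sigma V Hn) = 2 * e3" unfolding OHeq e3H by (rule pairs_card[OF finH(1) Hc])
    have ONeq: "Sigma V non = {(x,y). x\<noteq>y \<and> {x,y}\<in>C}"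
      unfolding non_def C_def complement_edges_def by (auto simp: insert_commute)
    have Cc: "\<forall>e\<in>C. card e = 2" unfolding C_def complement_edges_def by auto
    have cON: "card (Sigma V non) = 2 * ebar" unfolding ONeq ebar_def C_def[symmetric]
      by (rule pairs_card[OF finC Cc])
    have sumA: "(\<Sum>x\<in>V. a x) = 2 * real ebar"
    proof -
      have "card (Sigma V non) = (\<Sum>x\<in>V. card (non x))" using finV finn by simp
      then show ?thesis unfolding a_def using cON by (simp flip: of_nat_sum)
    qed
    have dna: "d x + a x = real t - 1" if "x \<in> V" for x
    proof -
      have u: "nbr x \<union> non x = V - {x}" and i: "nbr x \<inter> non x = {}"
        unfolding nbr_def non_def using Ev that by auto
      have "card (nbr x \<union> non x) = card (nbr x) + card (non x)"
        using finn i by (intro card_Un_disjoint) auto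
      then have "card (nbr x) + card (non x) = t - 1" using u finV that unfolding t_def by simp
      moreover have "t \<ge> 1" using assms(2) unfolding t_def by simp
      ultimately show ?thesis unfolding d_def a_def by (simp flip: of_nat_add)
    qed
    have pt: "f x + f y \<ge> 2 - 4 / real t" if "(x,y) \<in> Sigma V Hn" for x y
    proof -
      have xy: "{x,y} \<in> E" "\<not> in_triangle V E {x,y}" using that unfolding Hn_def H_def by auto
      have xyV: "x \<in> V" "y \<in> V" "x \<noteq> y" using Ev[OF xy(1)] by auto
      have yx: "{y,x} \<in> E" "\<not> in_triangle V E {y,x}" using xy by (auto simp: insert_commute)
      have "y \<in> Hn x" "x \<in> Hn y" unfolding Hn_def H_def using xy yx xyV by auto
      then have h1: "h x \<ge> 1" "h y \<ge> 1" unfolding h_def using finn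
        by (auto simp: Suc_le_eq card_gt_0_iff)
      have "Hn x \<subseteq> nbr x" "Hn y \<subseteq> nbr y" unfolding Hn_def nbr_def H_def by auto
      then have hd: "h x \<le> d x" "h y \<le> d y" unfolding h_def d_def using finn
        by (auto intro: card_mono)
      have disj: "nbr x \<inter> nbr y = {}"
      proof (rule ccontr)
        assume "nbr x \<inter> nbr y \<noteq> {}"
        then obtain z where "z \<in> V" "{x,z} \<in> E" "{y,z} \<in> E" unfolding nbr_def by auto
        then have "in_triangle V E {x,y}" unfolding in_triangle_def by blast
        then show False using xy by simp
      qed
      have "card (nbr x \<union> nbr y) \<le> card V" using finV by (intro card_mono) (auto simp: nbr_def)
      moreover have "card (nbr x \<union> nbr y) = card (nbr x) + card (nbr y)"
        using finn disj by (intro card_Un_disjoint) auto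
      ultimately have "d x + d y \<le> real t" unfolding d_def t_def by (simp flip: of_nat_add)
      moreover have "a x \<ge> 0" "a y \<ge> 0" unfolding a_def by auto
      ultimately have "(real t - 1 - d x)/h x + (real t - 1 - d y)/h y \<ge> 2 - 4 / real t"
        using h1 hd dna xyV by (intro real_key) auto
      then show ?thesis unfolding f_def using dna xyV by (smt (verit))
    qed
    have finOH: "finite (Sigma V Hn)" using finV finn by auto
    have S1: "(\<Sum>p\<in>Sigma V Hn. f (fst p) + f (snd p)) \<ge> real (card (Sigma V Hn)) * (2 - 4 / real t)"
    proof -
      have "(\<Sum>p\<in>Sigma V Hn. f (fst p) + f (snd p)) \<ge> (\<Sum>p\<in>Sigma V Hn. 2 - 4 / real t)"
        using pt by (intro sum_mono) auto
      then show ?thesis by simp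
    qed
    have swap: "(\<Sum>p\<in>Sigma V Hn. f (snd p)) = (\<Sum>p\<in>Sigma V Hn. f (fst p))"
      by (rule sum.reindex_bij_witness[of _ "\<lambda>(x,y). (y,x)" "\<lambda>(x,y). (y,x)"])
         (auto simp: OHeq insert_commute)
    have S2: "(\<Sum>p\<in>Sigma V Hn. f (fst p)) \<le> 2 * real ebar"
    proof -
      have "(\<Sum>x\<in>V. \<Sum>y\<in>Hn x. f x) = (\<Sum>(x,y)\<in>Sigma V Hn. f x)"
        using finV finn by (intro sum.Sigma) auto
      also have "\<dots> = (\<Sum>p\<in>Sigma V Hn. f (fst p))" by (simp add: split_def)
      finally have "(\<Sum>p\<in>Sigma V Hn. f (fst p)) = (\<Sum>x\<in>V. \<Sum>y\<in>Hn x. f x)" by simp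
      also have "\<dots> = (\<Sum>x\<in>V. h x * f x)" unfolding h_def by simp
      also have "\<dots> \<le> (\<Sum>x\<in>V. a x)"
      proof (rule sum_mono)
        fix x assume "x \<in> V"
        show "h x * f x \<le> a x" unfolding f_def using a_def h_def by (cases "h x = 0") auto
      qed
      finally show ?thesis using sumA by simp
    qed
    have "real (2 * e3) * (2 - 4 / real t) \<le> 4 * real ebar"
      using S1 S2 swap cOH by (simp add: sum.distrib)
    moreover have "4 / real t \<le> 1/10" using assms(2) unfolding t_def by (simp add: field_simps)
    moreover have "real (2 * e3) * (19/10) \<le> real (2 * e3) * (2 - 4 / real t)"
      using calculation(2) by (intro mult_left_mono) auto
    ultimately show ?thesis by simp
  qed
  have part1: "real (graph_weight V E) \<le> 2 powr real (t choose 2) * 2 powr (- 0.16 * real ebar)"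
  proof -
    have L1: "20 * ln (3/2::real) \<le> 15 * ln 2"
    proof -
      have "(3/2::real)^20 \<le> 2^15" by (simp add: power_divide)
      then have h: "ln ((3/2::real)^20) \<le> ln (2^15)" by (subst ln_le_cancel_iff) auto
      have e1: "ln ((3/2::real)^20) = real 20 * ln (3/2)" by (rule ln_realpow)
      have e2: "ln ((2::real)^15) = real 15 * ln 2" by (rule ln_realpow)
      show ?thesis using h e1 e2 unfolding of_nat_numeral by linarith
    qed
    have ln32: "ln (3/2::real) = ln 3 - ln 2" by (simp add: ln_div)
    have l2: "ln (2::real) > 0" by simp
    have l32: "ln (3/2::real) \<ge> 0" by simp
    have A: "real e3 * ln (3/2) * 19 \<le> real ebar * ln (3/2) * 20"
    proof -
      have "(19 * real e3) * ln (3/2) \<le> (20 * real ebar) * ln (3/2)"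
        using e3bound l32 by (rule mult_right_mono)
      then show ?thesis by (simp add: algebra_simps)
    qed
    have B: "real ebar * (20 * ln (3/2)) \<le> real ebar * (15 * ln 2)"
      using L1 by (intro mult_left_mono) auto
    have z0: "real ebar * ln 2 \<ge> 0" using l2 by simp
    have A': "19 * (real e3 * ln 3) - 19 * (real e3 * ln 2) \<le> 20 * (real ebar * ln 3) - 20 * (real ebar * ln 2)"
      using A unfolding ln32 by (simp add: algebra_simps)
    have B': "20 * (real ebar * ln 3) - 20 * (real ebar * ln 2) \<le> 15 * (real ebar * ln 2)"
      using B unfolding ln32 by (simp add: algebra_simps)
    have key: "real e2 * ln 2 + real e3 * ln 3 \<le> (real (t choose 2) - 0.16 * real ebar) * ln 2"
    proof -
      have "real (t choose 2) = real e2 + real e3 + real ebar"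
        using cardEC cardE by (simp flip: of_nat_add)
      then have eq: "(real (t choose 2) - 0.16 * real ebar) * ln 2
          = real e2 * ln 2 + real e3 * ln 2 + 21/25 * (real ebar * ln 2)"
        by (simp add: algebra_simps)
      show ?thesis unfolding eq using A' B' z0 by linarith
    qed
    have "real (graph_weight V E) = (2::real) ^ e2 * 3 ^ e3" unfolding gw by simp
    also have "\<dots> = exp (real e2 * ln 2 + real e3 * ln 3)"
      by (simp add: exp_add powr_def flip: powr_realpow)
    also have "\<dots> \<le> exp ((real (t choose 2) - 0.16 * real ebar) * ln 2)"
      using key by simp
    also have "\<dots> = 2 powr (real (t choose 2) - 0.16 * real ebar)"
      by (simp add: powr_def)
    also have "\<dots> = 2 powr real (t choose 2) * 2 powr (- 0.16 * real ebar)"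
      by (simp add: powr_add[symmetric])
    finally show ?thesis .
  qed
  have P1: "graph_weight V E = 2 ^ e2 * 3 ^ e3 \<and>
            real (graph_weight V E) \<le> 2 powr real (t choose 2) * 2 powr (- 0.16 * real ebar)"
    using gw part1 by (rule conjI)
  show ?thesis
  proof (rule conjI)
    show "real ebar \<le> real t ^ 2 / 4 \<longrightarrow>
            graph_weight V E = 2 ^ e2 * 3 ^ e3 \<and>
            real (graph_weight V E) \<le> 2 powr real (t choose 2) * 2 powr (- 0.16 * real ebar)"
      using P1 by (intro impI)
    show "real ebar > real t ^ 2 / 4 \<longrightarrow>
            real (graph_weight V E) < 3 powr (real t ^ 2 / 4)" by (rule part2)
  qed
qed

end
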